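(* Let $\alpha_1,\dots,\alpha_K,\gamma\in\mathbb R^d$, $\omega_1,\dots,\omega_K>0$, and $(\xi_n)$ a sequence in $\mathbb R^d$. Let $f_n(\theta)=-\sum_{k=1}^K\omega_k\exp(\alpha_k^{T}\theta)+\xi_n^{T}\theta-\tfrac12\theta^{T}\theta$ with unique maximizer $\hat\theta_n$, and $I(\theta)=I_d+\sum_{k=1}^K\omega_k\exp(\alpha_k^{T}\theta)\alpha_k\alpha_k^{T}$. If $\gamma^{T}\hat\theta_n\to+\infty$, then there is a constant $M>0$ independent of $n$ such that for all sufficiently large $n$ $M^{-1}\frac{(\gamma^{T}\hat\theta_n)\exp(f_n(\hat\theta_n))}{\sqrt{\det I(\hat\theta_n)}}\le\int_{\mathbb R^d}(2\pi)^{-d/2}(\gamma^{T}\theta)\exp(f_n(\theta))d\theta\le M\frac{(\gamma^{T}\hat\theta_n)\exp(f_n(\hat\theta_n))}{\sqrt{\det I(\hat\theta_n)}}.$ The same holds with $\gamma$ replaced by $-\gamma$ when $\gamma^{T}\hat\theta_n\to-\infty$. *)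

theory Defs
  imports "HOL-Analysis.Analysis"
begin

text \<open>The objective f_n, with alpha_1..alpha_K indexed by k < K (0-based),
  xi the n-th term xi_n.\<close>
definition fobj :: "nat \<Rightarrow> (nat \<Rightarrow> real^'d) \<Rightarrow> (nat \<Rightarrow> real) \<Rightarrow> real^'d \<Rightarrow> real^'d \<Rightarrow> real" where
  "fobj K \<alpha> \<omega> \<xi> \<theta> = - (\<Sum>k<K. \<omega> k * exp (\<alpha> k \<bullet> \<theta>)) + \<xi> \<bullet> \<theta> - (\<theta> \<bullet> \<theta>) / 2"

definition Imat :: "nat \<Rightarrow> (nat \<Rightarrow> real^'d) \<Rightarrow> (nat \<Rightarrow> real) \<Rightarrow> real^'d \<Rightarrow> real^'d^'d" where
  "Imat K \<alpha> \<omega> \<theta> = mat 1 + (\<Sum>k<K. (\<omega> k * exp (\<alpha> k \<bullet> \<theta>)) *\<^sub>R (\<chi> i j. \<alpha> k $ i * \<alpha> k $ j))"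

end

theory Submission
  imports Defs "HOL-Probability.Distributions"
begin



lemma det_shear_gen:
  fixes m n :: "'n::finite"
  assumes "m \<noteq> n"
  shows "det (matrix (\<lambda>v::real^'n. \<chi> i. if i = m then v $ m + v $ n else v $ i)) = 1"
proof -
  have "matrix (\<lambda>v::real^'n. \<chi> i. if i = m then v $ m + v $ n else v $ i)
     = (\<chi> k. if k = m then row m (mat 1) + 1 *s row n (mat 1) else row k (mat 1 :: real^'n^'n))"
    by (auto simp: matrix_def vec_eq_iff row_def mat_def axis_def)
  then show ?thesis using det_row_operation[OF assms, of "mat 1" 1] by simp
qed


proposition
 fixes f :: "real^'n::finite \<Rightarrow> real^'n"
  assumes "linear f" "S \<in> lmeasurable"
  shows measurable_linear_image_gen: "(f ` S) \<in> lmeasurable"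
    and measure_linear_image_gen: "measure lebesgue (f ` S) = \<bar>det (matrix f)\<bar> * measure lebesgue S" (is "?Q f S")
proof -
  have "\<forall>S \<in> lmeasurable. (f ` S) \<in> lmeasurable \<and> ?Q f S"
  proof (rule induct_linear_elementary [OF \<open>linear f\<close>]; intro ballI)
    fix f g and S :: "(real,'n) vec set"
    assume "linear f" and "linear g"
      and f [rule_format]: "\<forall>S \<in> lmeasurable. f ` S \<in> lmeasurable \<and> ?Q f S"
      and g [rule_format]: "\<forall>S \<in> lmeasurable. g ` S \<in> lmeasurable \<and> ?Q g S"
      and S: "S \<in> lmeasurable"
    then have gS: "g ` S \<in> lmeasurable"
      by blast
    show "(f \<circ> g) ` S \<in> lmeasurable \<and> ?Q (f \<circ> g) S"
      using f [OF gS] g [OF S] matrix_compose [OF \<open>linear g\<close> \<open>linear f\<close>]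
      by (simp add: o_def image_comp abs_mult det_mul)
  next
    fix f :: "real^'n::_ \<Rightarrow> real^'n::_" and i and S :: "(real^'n::_) set"
    assume "linear f" and 0: "\<And>x. f x $ i = 0" and "S \<in> lmeasurable"
    then have "\<not> inj f"
      by (metis (full_types) linear_injective_imp_surjective one_neq_zero surjE vec_component)
    have detf: "det (matrix f) = 0"
      using \<open>\<not> inj f\<close> det_nz_iff_inj[OF \<open>linear f\<close>] by blast
    show "f ` S \<in> lmeasurable \<and> ?Q f S"
    proof
      show "f ` S \<in> lmeasurable"
        using lmeasurable_iff_indicator_has_integral \<open>linear f\<close> \<open>\<not> inj f\<close> negligible_UNIV negligible_linear_singular_image by blast
      have "measure lebesgue (f ` S) = 0"
        by (meson \<open>\<not> inj f\<close> \<open>linear f\<close> negligible_imp_measure0 negligible_linear_singular_image)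
      also have "\<dots> = \<bar>det (matrix f)\<bar> * measure lebesgue S"
        by (simp add: detf)
      finally show "?Q f S" .
    qed
  next
    fix c and S :: "(real^'n::_) set"
    assume "S \<in> lmeasurable"
    show "(\<lambda>a. \<chi> i. c i * a $ i) ` S \<in> lmeasurable \<and> ?Q (\<lambda>a. \<chi> i. c i * a $ i) S"
    proof
      show "(\<lambda>a. \<chi> i. c i * a $ i) ` S \<in> lmeasurable"
        by (simp add: \<open>S \<in> lmeasurable\<close> measurable_stretch)
      show "?Q (\<lambda>a. \<chi> i. c i * a $ i) S"
        by (simp add: measure_stretch [OF \<open>S \<in> lmeasurable\<close>, of c] axis_def matrix_def det_diagonal)
    qed
  next
    fix m :: "'n" and n :: "'n" and S :: "(real, 'n) vec set"
    assume "m \<noteq> n" and "S \<in> lmeasurable"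
    let ?h = "\<lambda>v::(real, 'n) vec. \<chi> i. v $ Transposition.transpose m n i"
    have lin: "linear ?h"
      by (rule linearI) (simp_all add: plus_vec_def scaleR_vec_def)
    have meq: "measure lebesgue ((\<lambda>v::(real, 'n) vec. \<chi> i. v $ Transposition.transpose m n i) ` cbox a b)
             = measure lebesgue (cbox a b)" for a b
    proof (cases "cbox a b = {}")
      case True then show ?thesis
        by simp
    next
      case False
      then have him: "?h ` (cbox a b) \<noteq> {}"
        by blast
      have eq: "?h ` (cbox a b) = cbox (?h a) (?h b)"
        by (auto simp: image_iff lambda_swap_Galois mem_box_cart) (metis transpose_involutory)+
      show ?thesis
        using him prod.permute [OF permutes_swap_id, where S=UNIV and g="\<lambda>i. (b - a)$i", symmetric]
        by (simp add: eq content_cbox_cart False)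
    qed
    have "(\<chi> i j. if Transposition.transpose m n i = j then 1 else 0) = (\<chi> i j. if j = Transposition.transpose m n i then 1 else (0::real))"
      by (auto intro!: Cart_lambda_cong)
    then have "matrix ?h = transpose(\<chi> i j. mat 1 $ i $ Transposition.transpose m n j)"
      by (auto simp: matrix_eq transpose_def axis_def mat_def matrix_def)
    then have 1: "\<bar>det (matrix ?h)\<bar> = 1"
      by (simp add: det_permute_columns permutes_swap_id sign_swap_id abs_mult)
    show "?h ` S \<in> lmeasurable \<and> ?Q ?h S"
      using measure_linear_sufficient [OF lin \<open>S \<in> lmeasurable\<close>] meq 1 by force
  next
    fix m n :: "'n" and S :: "(real, 'n) vec set"
    assume "m \<noteq> n" and "S \<in> lmeasurable"
    let ?h = "\<lambda>v::(real, 'n) vec. \<chi> i. if i = m then v $ m + v $ n else v $ i"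
    have lin: "linear ?h"
      by (rule linearI) (auto simp: algebra_simps plus_vec_def scaleR_vec_def vec_eq_iff)
    have 1: "det(matrix ?h) = 1" using det_shear_gen[OF \<open>m \<noteq> n\<close>] .
    have meq: "measure lebesgue (?h ` (cbox a b)) = measure lebesgue (cbox a b)" for a b
    proof (cases "cbox a b = {}")
      case True then show ?thesis by simp
    next
      case False
      then have ne: "(+) (\<chi> i. if i = n then - a $ n else 0) ` cbox a b \<noteq> {}"
        by auto
      let ?v = "\<chi> i. if i = n then - a $ n else 0"
      have "?h ` cbox a b
            = (+) (\<chi> i. if i = m \<or> i = n then a $ n else 0) ` ?h ` (+) ?v ` (cbox a b)"
        using \<open>m \<noteq> n\<close> unfolding image_comp o_def by (force simp: vec_eq_iff)
      then have "measure lebesgue (?h ` (cbox a b))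
               = measure lebesgue ((\<lambda>v. \<chi> i. if i = m then v $ m + v $ n else v $ i) `
                                   (+) ?v ` cbox a b)"
        by (rule ssubst) (rule measure_translation)
      also have "\<dots> = measure lebesgue ((\<lambda>v. \<chi> i. if i = m then v $ m + v $ n else v $ i) ` cbox (?v +a) (?v + b))"
        by (metis (no_types, lifting) cbox_translation)
      also have "\<dots> = measure lebesgue ((+) ?v ` cbox a b)"
        apply (subst measure_shear_interval)
        using \<open>m \<noteq> n\<close> ne apply auto
        apply (simp add: cbox_translation)
        by (metis cbox_borel cbox_translation measure_completion sets_lborel)
      also have "\<dots> = measure lebesgue (cbox a b)"
        by (rule measure_translation)
        finally show ?thesis .
      qed
    show "?h ` S \<in> lmeasurable \<and> ?Q ?h S"
      using measure_linear_sufficient [OF lin \<open>S \<in> lmeasurable\<close>] meq 1 by force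
  qed
  with assms show "(f ` S) \<in> lmeasurable" "?Q f S"
    by metis+
qed

lemma lborel_affine_linear:
  fixes T :: "real^'n::finite \<Rightarrow> real^'n" and t :: "real^'n"
  assumes lin: "linear T" and dT: "det (matrix T) \<noteq> 0"
  shows "lborel = density (distr lborel borel (\<lambda>x. t + T x)) (\<lambda>_. ennreal \<bar>det (matrix T)\<bar>)"
proof (rule lborel_eqI)
  obtain Ti where Ti: "linear Ti" "\<And>x. Ti (T x) = x" "\<And>x. T (Ti x) = x"
    using linear_injective_isomorphism[of T] lin dT det_nz_iff_inj[OF lin] by metis
  have cT: "continuous_on UNIV T" by (simp add: lin linear_continuous_on linear_linear)
  have [measurable]: "(\<lambda>x. t + T x) \<in> borel_measurable borel"
    by (intro borel_measurable_continuous_onI continuous_intros cT) 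
  have detmul: "det (matrix T) * det (matrix Ti) = 1"
  proof -
    have "T \<circ> Ti = id" using Ti by auto
    then have "matrix T ** matrix Ti = mat 1"
      using matrix_compose[OF Ti(1) lin] by (simp add: matrix_id_mat_1)
    then show ?thesis by (metis det_I det_mul)
  qed
  fix l u :: "real^'n"
  assume le: "\<And>b. b \<in> Basis \<Longrightarrow> l \<bullet> b \<le> u \<bullet> b"
  let ?P = "(\<lambda>x. t + T x) -` box l u"
  have Popen: "open ?P"
    by (intro open_vimage continuous_intros cT) auto
  have Peq: "?P = Ti ` box (l - t) (u - t)"
  proof -
    have "?P = Ti ` ((\<lambda>y. y - t) ` box l u)"
    proof safe
      fix x assume "t + T x \<in> box l u"
      then show "x \<in> Ti ` (\<lambda>y. y - t) ` box l u"
        using Ti(2) by (metis add_diff_cancel_left' image_eqI)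
    next
      fix y assume "y \<in> box l u"
      then show "Ti (y - t) \<in> ?P" using Ti(3) by simp
    qed
    also have "(\<lambda>y. y - t) ` box l u = box (l - t) (u - t)"
    proof safe
      fix y assume "y \<in> box l u"
      then show "y - t \<in> box (l - t) (u - t)" by (auto simp: mem_box inner_diff_left)
    next
      fix x assume "x \<in> box (l - t) (u - t)"
      then show "x \<in> (\<lambda>y. y - t) ` box l u"
        by (intro image_eqI[where x="x + t"]) (auto simp: mem_box inner_diff_left inner_add_left)
    qed
    finally show ?thesis .
  qed
  have bm: "box (l - t) (u - t) \<in> lmeasurable" by simp
  have mP: "measure lebesgue ?P = \<bar>det (matrix Ti)\<bar> * measure lebesgue (box (l - t) (u - t))"
    unfolding Peq by (rule measure_linear_image_gen[OF Ti(1) bm])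
  have Pl: "?P \<in> lmeasurable" unfolding Peq by (rule measurable_linear_image_gen[OF Ti(1) bm])
  have Pb: "?P \<in> sets borel" using Popen by simp
  have "emeasure lborel ?P = ennreal (measure lborel ?P)"
  proof -
    have Pb': "?P \<in> sets lborel" using Pb by simp
    have "emeasure lebesgue ?P < \<infinity>" using Pl by (simp add: fmeasurable_def del: emeasure_completion)
    then have "emeasure lborel ?P < \<infinity>" using Pb' by simp
    then have "emeasure lborel ?P \<noteq> top" using less_top by (simp only: infinity_ennreal_def)
    then show ?thesis by (rule emeasure_eq_ennreal_measure)
  qed
  note e0 = this
  have m1: "measure lborel ?P = measure lebesgue ?P" using Pb by (simp only: measure_completion sets_lborel)
  have pnn: "0 \<le> (\<Prod>b\<in>Basis. (u - l) \<bullet> b)" using le by (simp add: prod_nonneg inner_diff_left)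
  have m2: "measure lebesgue (box (l - t) (u - t)) = (\<Prod>b\<in>Basis. (u - l) \<bullet> b)"
    using le by (simp add: measure_lborel_box_eq inner_diff_left)
  have eP: "emeasure lborel ?P = ennreal (\<bar>det (matrix Ti)\<bar> * (\<Prod>b\<in>Basis. (u - l) \<bullet> b))"
    by (simp only: e0 m1 mP m2)
  have "emeasure (density (distr lborel borel (\<lambda>x. t + T x)) (\<lambda>_. ennreal \<bar>det (matrix T)\<bar>)) (box l u)
      = ennreal \<bar>det (matrix T)\<bar> * emeasure lborel ?P"
    by (simp add: emeasure_density emeasure_distr nn_integral_cmult_indicator)
  also have "\<dots> = ennreal (\<bar>det (matrix T)\<bar> * (\<bar>det (matrix Ti)\<bar> * (\<Prod>b\<in>Basis. (u - l) \<bullet> b)))"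
    unfolding eP by (rule ennreal_mult[symmetric]) (use pnn in auto)
  also have "\<bar>det (matrix T)\<bar> * (\<bar>det (matrix Ti)\<bar> * (\<Prod>b\<in>Basis. (u - l) \<bullet> b)) = (\<Prod>b\<in>Basis. (u - l) \<bullet> b)"
    by (simp only: mult.assoc[symmetric] abs_mult[symmetric] detmul abs_one mult_1)
  finally show "emeasure (density (distr lborel borel (\<lambda>x. t + T x)) (\<lambda>_. ennreal \<bar>det (matrix T)\<bar>)) (box l u) = (\<Prod>b\<in>Basis. (u - l) \<bullet> b)" .
qed simp

lemma integral_affine_linear:
  fixes T :: "real^'n::finite \<Rightarrow> real^'n" and t :: "real^'n" and f :: "real^'n \<Rightarrow> real"
  assumes lin: "linear T" and dT: "det (matrix T) \<noteq> 0" and fm: "f \<in> borel_measurable borel"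
  shows "integral\<^sup>L lborel f = \<bar>det (matrix T)\<bar> * integral\<^sup>L lborel (\<lambda>x. f (t + T x))"
    and "integrable lborel f \<longleftrightarrow> integrable lborel (\<lambda>x. f (t + T x))"
proof -
  have cT: "continuous_on UNIV T" by (simp add: lin linear_continuous_on linear_linear)
  have Fm[measurable]: "(\<lambda>x. t + T x) \<in> borel_measurable borel"
    by (intro borel_measurable_continuous_onI continuous_intros cT)
  have fm'[measurable]: "f \<in> borel_measurable borel" by (rule fm)
  have "integral\<^sup>L lborel f = integral\<^sup>L (density (distr lborel borel (\<lambda>x. t + T x)) (\<lambda>_. ennreal \<bar>det (matrix T)\<bar>)) f"
    by (subst lborel_affine_linear[OF lin dT, of t]) (rule refl)
  also have "\<dots> = integral\<^sup>L (distr lborel borel (\<lambda>x. t + T x)) (\<lambda>x. \<bar>det (matrix T)\<bar> *\<^sub>R f x)"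
    by (rule integral_density) auto
  also have "\<dots> = integral\<^sup>L lborel (\<lambda>x. \<bar>det (matrix T)\<bar> *\<^sub>R f (t + T x))"
    by (rule integral_distr) auto
  also have "\<dots> = \<bar>det (matrix T)\<bar> * integral\<^sup>L lborel (\<lambda>x. f (t + T x))"
    by simp
  finally show "integral\<^sup>L lborel f = \<bar>det (matrix T)\<bar> * integral\<^sup>L lborel (\<lambda>x. f (t + T x))" .
  have "integrable lborel f \<longleftrightarrow> integrable (density (distr lborel borel (\<lambda>x. t + T x)) (\<lambda>_. ennreal \<bar>det (matrix T)\<bar>)) f"
    by (subst lborel_affine_linear[OF lin dT, of t]) (rule refl)
  also have "\<dots> \<longleftrightarrow> integrable (distr lborel borel (\<lambda>x. t + T x)) (\<lambda>x. \<bar>det (matrix T)\<bar> *\<^sub>R f x)"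
    by (rule integrable_density) auto
  also have "\<dots> \<longleftrightarrow> integrable lborel (\<lambda>x. \<bar>det (matrix T)\<bar> *\<^sub>R f (t + T x))"
    by (rule integrable_distr_eq) auto
  also have "\<dots> \<longleftrightarrow> integrable lborel (\<lambda>x. f (t + T x))"
    using dT by simp
  finally show "integrable lborel f \<longleftrightarrow> integrable lborel (\<lambda>x. f (t + T x))" .
qed



definition outer :: "real^'n::finite \<Rightarrow> real^'n^'n" where
  "outer a = (\<chi> i j. a$i * a$j)"

lemma outer_mult: "outer a *v x = (a \<bullet> x) *\<^sub>R a"
  by (simp add: outer_def vec_eq_iff matrix_vector_mult_def inner_vec_def sum_distrib_left mult_ac)

lemma transpose_outer: "transpose (outer a) = outer a"
  by (simp add: outer_def transpose_def vec_eq_iff mult.commute)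

lemma inner_transpose_mv: "(transpose P *v a) \<bullet> y = a \<bullet> (P *v y)"
  for P :: "real^'n::finite^'n"
  by (simp add: dot_lmul_matrix)

lemma rank_one_step:
  fixes b :: "real^'n::finite" and w :: real
  assumes w: "w \<ge> 0"
  shows "\<exists>c. \<forall>x. (let y = x + (c * (b \<bullet> x)) *\<^sub>R b; z = y + (w * (b \<bullet> y)) *\<^sub>R b
                   in z + (c * (b \<bullet> z)) *\<^sub>R b) = x"
proof (cases "b \<bullet> b = 0")
  case True
  then have "b = 0" by simp
  then show ?thesis by simp
next
  case False
  define s where "s = b \<bullet> b"
  have s: "s > 0" using False by (simp add: s_def)
  define c where "c = (1 / sqrt (1 + w * s) - 1) / s"
  have ws: "1 + w * s > 0" using w s by (simp add: add_pos_nonneg)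
  have cs: "1 + c * s = 1 / sqrt (1 + w * s)" using s by (simp add: c_def)
  have key: "(1 + c * s)^2 * (1 + w * s) = 1" using ws unfolding cs
    by (simp add: power_divide)
  have coef: "2 * c + w + 2 * c * w * s + c^2 * s + c^2 * w * s^2 = 0"
  proof -
    have "s * (2 * c + w + 2 * c * w * s + c^2 * s + c^2 * w * s^2) = (1 + c * s)^2 * (1 + w * s) - 1"
      by (simp add: power2_eq_square algebra_simps)
    then show ?thesis using key s by simp
  qed
  show ?thesis
  proof (intro exI allI)
    fix x
    define \<beta> where "\<beta> = b \<bullet> x"
    define y where "y = x + (c * \<beta>) *\<^sub>R b"
    have bY: "b \<bullet> y = \<beta> * (1 + c * s)"
      by (simp add: y_def inner_add_right s_def \<beta>_def algebra_simps)
    define z where "z = y + (w * (b \<bullet> y)) *\<^sub>R b"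
    have bz: "b \<bullet> z = \<beta> * (1 + c * s) * (1 + w * s)"
      by (simp add: z_def inner_add_right bY s_def algebra_simps)
    have "z + (c * (b \<bullet> z)) *\<^sub>R b = x + (c * \<beta> + w * (\<beta> * (1 + c * s)) + c * (\<beta> * (1 + c * s) * (1 + w * s))) *\<^sub>R b"
    proof -
      have "z + (c * (b \<bullet> z)) *\<^sub>R b = x + (c * \<beta>) *\<^sub>R b + (w * (\<beta> * (1 + c * s))) *\<^sub>R b + (c * (\<beta> * (1 + c * s) * (1 + w * s))) *\<^sub>R b"
        by (simp only: bz, simp only: z_def bY, simp add: y_def)
      then show ?thesis by (simp add: scaleR_add_left)
    qed
    also have "c * \<beta> + w * (\<beta> * (1 + c * s)) + c * (\<beta> * (1 + c * s) * (1 + w * s))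
       = \<beta> * (2 * c + w + 2 * c * w * s + c^2 * s + c^2 * w * s^2)"
      by (simp add: power2_eq_square algebra_simps)
    finally have "(let y = x + (c * (b \<bullet> x)) *\<^sub>R b; z = y + (w * (b \<bullet> y)) *\<^sub>R b
                   in z + (c * (b \<bullet> z)) *\<^sub>R b) = x + (\<beta> * (2 * c + w + 2 * c * w * s + c^2 * s + c^2 * w * s^2)) *\<^sub>R b"
      by (simp add: Let_def y_def z_def \<beta>_def)
    then show "(let y = x + (c * (b \<bullet> x)) *\<^sub>R b; z = y + (w * (b \<bullet> y)) *\<^sub>R b
                   in z + (c * (b \<bullet> z)) *\<^sub>R b) = x" using coef by simp
  qed
qed

lemma congruence_exists:
  fixes a :: "nat \<Rightarrow> real^'n::finite" and w :: "nat \<Rightarrow> real"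
  assumes "\<And>k. k < m \<Longrightarrow> w k \<ge> 0"
  shows "\<exists>P::real^'n^'n. \<forall>x. transpose P *v ((mat 1 + (\<Sum>k<m. w k *\<^sub>R outer (a k))) *v (P *v x)) = x"
  using assms
proof (induction m)
  case 0
  show ?case by (rule exI[of _ "mat 1 :: real^'n^'n"]) simp
next
  case (Suc m)
  then obtain P :: "real^'n^'n" where P: "\<And>x. transpose P *v ((mat 1 + (\<Sum>k<m. w k *\<^sub>R outer (a k))) *v (P *v x)) = x"
    by (metis less_SucI)
  define b where "b = transpose P *v a m"
  obtain c where c: "\<And>x. (let y = x + (c * (b \<bullet> x)) *\<^sub>R b; z = y + (w m * (b \<bullet> y)) *\<^sub>R b
                   in z + (c * (b \<bullet> z)) *\<^sub>R b) = x"
    using rank_one_step[of "w m" b] Suc.prems by auto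
  define R where "R = mat 1 + c *\<^sub>R outer b"
  have Rv: "R *v x = x + (c * (b \<bullet> x)) *\<^sub>R b" for x
    by (simp add: R_def matrix_vector_mult_add_rdistrib scaleR_matrix_vector_assoc[symmetric] outer_mult)
  have RT: "transpose R = R"
    by (simp add: R_def transpose_def outer_def mat_def vec_eq_iff mult.commute)
  have step: "transpose P *v ((mat 1 + (\<Sum>k<Suc m. w k *\<^sub>R outer (a k))) *v (P *v y)) = y + (w m * (b \<bullet> y)) *\<^sub>R b" for y
  proof -
    have "transpose P *v ((mat 1 + (\<Sum>k<Suc m. w k *\<^sub>R outer (a k))) *v (P *v y))
        = transpose P *v ((mat 1 + (\<Sum>k<m. w k *\<^sub>R outer (a k))) *v (P *v y))
          + transpose P *v ((w m *\<^sub>R outer (a m)) *v (P *v y))"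
      by (simp add: matrix_vector_mult_add_rdistrib matrix_vector_right_distrib add.assoc)
    also have "transpose P *v ((w m *\<^sub>R outer (a m)) *v (P *v y)) = (w m * (b \<bullet> y)) *\<^sub>R b"
      by (simp add: scaleR_matrix_vector_assoc[symmetric] outer_mult matrix_vector_mult_scaleR b_def inner_transpose_mv dot_lmul_matrix)
    finally show ?thesis using P by simp
  qed
  show ?case
  proof (intro exI[of _ "P ** R"] allI)
    fix x
    have "transpose (P ** R) *v ((mat 1 + (\<Sum>k<Suc m. w k *\<^sub>R outer (a k))) *v ((P ** R) *v x))
        = R *v (transpose P *v ((mat 1 + (\<Sum>k<Suc m. w k *\<^sub>R outer (a k))) *v (P *v (R *v x))))"
      by (simp add: matrix_transpose_mul RT matrix_vector_mul_assoc[symmetric])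
    also have "\<dots> = x" unfolding step Rv using c[of x] by (simp add: Let_def)
    finally show "transpose (P ** R) *v ((mat 1 + (\<Sum>k<Suc m. w k *\<^sub>R outer (a k))) *v ((P ** R) *v x)) = x" .
  qed
qed

lemma congruence_det:
  fixes A P :: "real^'n::finite^'n"
  assumes "\<And>x. transpose P *v (A *v (P *v x)) = x"
  shows "det P ^ 2 * det A = 1"
proof -
  have "transpose P ** A ** P = mat 1"
    using assms by (simp add: matrix_eq matrix_vector_mul_assoc matrix_mul_assoc)
  then have "det (transpose P ** A ** P) = 1" by simp
  then show ?thesis by (simp add: det_mul power2_eq_square mult_ac)
qed



lemma nn_integral_exp_abs_1d:
  fixes b :: real assumes b: "b > 0"
  shows "(\<integral>\<^sup>+t. ennreal (exp (- b * \<bar>t\<bar>)) \<partial>lborel) < \<infinity>"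
proof -
  have ps: "prob_space (density lborel (exponential_density b))"
    by (rule prob_space_exponential_density[OF b])
  have one: "(\<integral>\<^sup>+t. ennreal (exponential_density b t) \<partial>lborel) = 1"
  proof -
    have "emeasure (density lborel (exponential_density b)) UNIV = 1"
      using prob_space.emeasure_space_1[OF ps] by simp
    then show ?thesis by (simp add: emeasure_density)
  qed
  have one': "(\<integral>\<^sup>+t. ennreal (exponential_density b (- t)) \<partial>lborel) = 1"
    using nn_integral_real_affine[of "\<lambda>t. ennreal (exponential_density b t)" "-1" 0] one
    by simp
  have le: "ennreal (exp (- b * \<bar>t\<bar>)) \<le> ennreal (1/b) * (ennreal (exponential_density b t) + ennreal (exponential_density b (- t)))" for t
  proof -
    have "exp (- b * \<bar>t\<bar>) \<le> (1/b) * (exponential_density b t + exponential_density b (- t))"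
      using b by (auto simp: exponential_density_def field_simps abs_if)
    then show ?thesis using b
      by (simp add: ennreal_mult[symmetric] exponential_density_nonneg ennreal_plus[symmetric] del: ennreal_plus)
  qed
  have "(\<integral>\<^sup>+t. ennreal (exp (- b * \<bar>t\<bar>)) \<partial>lborel)
     \<le> (\<integral>\<^sup>+t. ennreal (1/b) * (ennreal (exponential_density b t) + ennreal (exponential_density b (- t))) \<partial>lborel)"
    by (rule nn_integral_mono) (rule le)
  also have "\<dots> = ennreal (1/b) * (1 + 1)"
    by (simp add: nn_integral_cmult nn_integral_add one one')
  also have "\<dots> < \<infinity>" by (simp add: ennreal_mult_less_top)
  finally show ?thesis .
qed

lemma integrable_exp_neg_norm:
  fixes a :: real assumes a: "a > 0"
  shows "integrable lborel (\<lambda>v::'a::euclidean_space. exp (- a * norm v))"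
proof (subst integrable_iff_bounded, intro conjI)
  show "(\<lambda>v::'a. exp (- a * norm v)) \<in> borel_measurable lborel" by measurable
  define b where "b = a / real DIM('a)"
  have b: "b > 0" using a by (simp add: b_def)
  have le: "ennreal (norm (exp (- a * norm v))) \<le> ennreal (\<Prod>j\<in>Basis. exp (- b * \<bar>v \<bullet> j\<bar>))" for v :: 'a
  proof -
    have "(\<Sum>j\<in>Basis. \<bar>v \<bullet> j\<bar>) \<le> (\<Sum>j\<in>(Basis::'a set). norm v)"
      by (rule sum_mono) (rule Basis_le_norm)
    then have "(\<Sum>j\<in>Basis. \<bar>v \<bullet> j\<bar>) \<le> real DIM('a) * norm v" by simp
    then have "b * (\<Sum>j\<in>Basis. \<bar>v \<bullet> j\<bar>) \<le> a * norm v"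
      using a by (simp add: b_def field_simps)
    then have "exp (- a * norm v) \<le> exp (- b * (\<Sum>j\<in>Basis. \<bar>v \<bullet> j\<bar>))" by simp
    also have "\<dots> = (\<Prod>j\<in>Basis. exp (- b * \<bar>v \<bullet> j\<bar>))"
      by (simp add: sum_distrib_left sum_negf exp_sum[symmetric])
    finally show ?thesis by (simp add: ennreal_leI)
  qed
  have "(\<integral>\<^sup>+v. ennreal (norm (exp (- a * norm v))) \<partial>(lborel::'a measure))
      \<le> (\<integral>\<^sup>+v. (\<Prod>j\<in>Basis. ennreal (exp (- b * \<bar>v \<bullet> j\<bar>))) \<partial>(lborel::'a measure))"
    by (rule nn_integral_mono) (metis le prod_ennreal exp_ge_zero)
  also have "\<dots> = (\<Prod>j\<in>(Basis::'a set). (\<integral>\<^sup>+t. ennreal (exp (- b * \<bar>t\<bar>)) \<partial>lborel))"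
    by (rule nn_integral_lborel_prod[where f="\<lambda>_ t. ennreal (exp (- b * \<bar>t\<bar>))"]) auto
  also have "\<dots> < \<infinity>"
    using nn_integral_exp_abs_1d[OF b] by (simp add: power_less_top_ennreal)
  finally show "(\<integral>\<^sup>+v. ennreal (norm (exp (- a * norm v))) \<partial>(lborel::'a measure)) < \<infinity>" .
qed



definition phi :: "real \<Rightarrow> real" where "phi t = exp t - 1 - t"

definition gf :: "nat \<Rightarrow> (nat \<Rightarrow> real^'d) \<Rightarrow> (nat \<Rightarrow> real) \<Rightarrow> real^'d \<Rightarrow> real" where
  "gf K \<alpha> w u = (\<Sum>k<K. w k * phi (\<alpha> k \<bullet> u)) + (u \<bullet> u) / 2"

definition qf :: "nat \<Rightarrow> (nat \<Rightarrow> real^'d) \<Rightarrow> (nat \<Rightarrow> real) \<Rightarrow> real^'d \<Rightarrow> real" where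
  "qf K \<alpha> w u = u \<bullet> u + (\<Sum>k<K. w k * (\<alpha> k \<bullet> u)^2)"

lemma phi_bounds:
  assumes "\<bar>t\<bar> \<le> L"
  shows "exp (- L) * t^2 / 2 \<le> phi t" "phi t \<le> exp L * t^2 / 2"
proof -
  obtain s where s: "\<bar>s\<bar> \<le> \<bar>t\<bar>" "exp t = (\<Sum>m<2. (t ^ m) / fact m) + (exp s / fact 2) * t ^ 2"
    using Maclaurin_exp_le[of t 2] by blast
  have p: "phi t = exp s * t^2 / 2"
    using s(2) by (simp add: phi_def eval_nat_numeral)
  have "exp (- L) \<le> exp s" "exp s \<le> exp L" using s(1) assms by auto
  then show "exp (- L) * t^2 / 2 \<le> phi t" "phi t \<le> exp L * t^2 / 2"
    unfolding p by (auto intro: mult_right_mono)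
qed

lemma phi_nonneg: "phi t \<ge> 0"
  unfolding phi_def using exp_ge_add_one_self[of t] by linarith

lemma gf_bounds:
  fixes \<alpha> :: "nat \<Rightarrow> real^'d"
  assumes w: "\<And>k. k < K \<Longrightarrow> w k \<ge> 0" and L: "\<And>k. k < K \<Longrightarrow> norm (\<alpha> k) \<le> L" and L0: "L \<ge> 0"
    and u: "norm u \<le> 1"
  shows "exp (- L) / 2 * qf K \<alpha> w u \<le> gf K \<alpha> w u" "gf K \<alpha> w u \<le> exp L / 2 * qf K \<alpha> w u"
proof -
  have tL: "\<bar>\<alpha> k \<bullet> u\<bar> \<le> L" if "k < K" for k
  proof -
    have "\<bar>\<alpha> k \<bullet> u\<bar> \<le> norm (\<alpha> k) * norm u" by (rule Cauchy_Schwarz_ineq2)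
    also have "\<dots> \<le> L * 1" using L[OF that] u L0 by (intro mult_mono) auto
    finally show ?thesis by simp
  qed
  have e1: "exp (- L) \<le> 1" "1 \<le> exp L" using L0 by auto
  have uu: "u \<bullet> u \<ge> 0" by simp
  have "(\<Sum>k<K. w k * (exp (- L) * (\<alpha> k \<bullet> u)^2 / 2)) \<le> (\<Sum>k<K. w k * phi (\<alpha> k \<bullet> u))"
    by (intro sum_mono mult_left_mono phi_bounds(1) tL w) auto
  moreover have "exp (- L) / 2 * (u \<bullet> u) \<le> (u \<bullet> u) / 2"
    using e1 uu by (simp add: mult_left_le_one_le divide_right_mono mult_le_cancel_right1)
  ultimately show "exp (- L) / 2 * qf K \<alpha> w u \<le> gf K \<alpha> w u"
    unfolding qf_def gf_def by (simp add: distrib_left sum_distrib_left mult_ac)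
  have "(\<Sum>k<K. w k * phi (\<alpha> k \<bullet> u)) \<le> (\<Sum>k<K. w k * (exp L * (\<alpha> k \<bullet> u)^2 / 2))"
    by (intro sum_mono mult_left_mono phi_bounds(2) tL w) auto
  moreover have "(u \<bullet> u) / 2 \<le> exp L / 2 * (u \<bullet> u)"
  proof -
    have "1 * (u \<bullet> u) \<le> exp L * (u \<bullet> u)" by (rule mult_right_mono[OF e1(2) uu])
    then show ?thesis by simp
  qed
  ultimately show "gf K \<alpha> w u \<le> exp L / 2 * qf K \<alpha> w u"
    unfolding qf_def gf_def by (simp add: distrib_left sum_distrib_left mult_ac)
qed

lemma phi_scale:
  assumes "s \<ge> 1"
  shows "phi (t / s) \<le> phi t / s"
proof -
  have "exp ((1 - 1/s) *\<^sub>R 0 + (1/s) *\<^sub>R t) \<le> (1 - 1/s) * exp 0 + (1/s) * exp t"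
    by (rule convex_onD[OF exp_convex]) (use assms in auto)
  then have "exp (t / s) \<le> exp t / s + 1 - 1 / s" by (simp add: algebra_simps)
  then show ?thesis using assms by (simp add: phi_def diff_divide_distrib)
qed

lemma gf_scale:
  assumes w: "\<And>k. k < K \<Longrightarrow> w k \<ge> 0" and s: "s \<ge> 1"
  shows "gf K \<alpha> w ((1/s) *\<^sub>R u) \<le> gf K \<alpha> w u / s"
proof -
  have "(\<Sum>k<K. w k * phi (\<alpha> k \<bullet> ((1/s) *\<^sub>R u))) \<le> (\<Sum>k<K. w k * (phi (\<alpha> k \<bullet> u) / s))"
  proof (rule sum_mono)
    fix k assume "k \<in> {..<K}"
    then have wk: "w k \<ge> 0" using w by auto
    have "\<alpha> k \<bullet> ((1/s) *\<^sub>R u) = (\<alpha> k \<bullet> u) / s" by simp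
    then show "w k * phi (\<alpha> k \<bullet> ((1/s) *\<^sub>R u)) \<le> w k * (phi (\<alpha> k \<bullet> u) / s)"
      using mult_left_mono[OF phi_scale[OF s, of "\<alpha> k \<bullet> u"] wk] by simp
  qed
  moreover have "((1/s) *\<^sub>R u) \<bullet> ((1/s) *\<^sub>R u) / 2 \<le> (u \<bullet> u) / 2 / s"
  proof -
    have "((1/s) *\<^sub>R u) \<bullet> ((1/s) *\<^sub>R u) = (u \<bullet> u) / s / s" by (simp add: power2_eq_square)
    also have "\<dots> = ((u \<bullet> u) / s) * (1 / s)" by simp
    also have "\<dots> \<le> ((u \<bullet> u) / s) * 1" by (rule mult_left_mono) (use s in auto)
    finally show ?thesis by (simp add: divide_right_mono)
  qed
  ultimately show ?thesis unfolding gf_def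
    by (simp add: sum_divide_distrib add_divide_distrib)
qed

lemma qf_scale: "qf K \<alpha> w (c *\<^sub>R u) = c^2 * qf K \<alpha> w u"
  by (simp add: qf_def power2_eq_square sum_distrib_left algebra_simps)

lemma gf_lower:
  fixes \<alpha> :: "nat \<Rightarrow> real^'d"
  assumes w: "\<And>k. k < K \<Longrightarrow> w k \<ge> 0" and L: "\<And>k. k < K \<Longrightarrow> norm (\<alpha> k) \<le> L" and L0: "L \<ge> 0"
    and q: "qf K \<alpha> w u = norm v ^ 2" and uv: "norm u \<le> norm v"
  shows "exp (- L) / 2 * (norm v - 1) \<le> gf K \<alpha> w u"
proof (cases "norm u \<le> 1")
  case True
  have h: "0 \<le> (norm v - 1)^2 + norm v" by simp
  have "norm v - 1 \<le> norm v ^ 2" using h by (simp add: power2_eq_square algebra_simps)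
  then have "exp (- L) / 2 * (norm v - 1) \<le> exp (- L) / 2 * qf K \<alpha> w u"
    using q by (intro mult_left_mono) auto
  also have "\<dots> \<le> gf K \<alpha> w u" by (rule gf_bounds(1)[OF w L L0 True])
  finally show ?thesis .
next
  case False
  define s where "s = norm u"
  have s1: "s > 1" using False by (simp add: s_def)
  define u0 where "u0 = (1/s) *\<^sub>R u"
  have nu0: "norm u0 \<le> 1" using s1 by (simp add: u0_def s_def)
  have "exp (- L) / 2 * qf K \<alpha> w u0 \<le> gf K \<alpha> w u0" by (rule gf_bounds(1)[OF w L L0 nu0])
  also have "\<dots> \<le> gf K \<alpha> w u / s" unfolding u0_def by (rule gf_scale[OF w]) (use s1 in auto)
  finally have "exp (- L) / 2 * (norm v ^ 2 / s^2) \<le> gf K \<alpha> w u / s"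
    by (simp add: u0_def qf_scale q power_divide)
  then have A: "exp (- L) / 2 * (norm v ^ 2 / s) \<le> gf K \<alpha> w u"
    using s1 by (simp add: field_simps power2_eq_square)
  have vs: "s \<le> norm v" using uv by (simp add: s_def)
  have "norm v * s \<le> norm v * norm v" using vs by (intro mult_left_mono) auto
  then have "norm v \<le> norm v ^ 2 / s" using s1 by (simp add: le_divide_eq power2_eq_square)
  then have "exp (- L) / 2 * (norm v - 1) \<le> exp (- L) / 2 * (norm v ^ 2 / s)"
    by (intro mult_left_mono) auto
  then show ?thesis using A by linarith
qed



lemma grad_zero:
  fixes \<alpha> :: "nat \<Rightarrow> real^'d"
  assumes max: "\<And>\<theta>. fobj K \<alpha> \<omega> \<xi> \<theta> \<le> fobj K \<alpha> \<omega> \<xi> th"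
  shows "\<xi> = th + (\<Sum>k<K. (\<omega> k * exp (\<alpha> k \<bullet> th)) *\<^sub>R \<alpha> k)"
proof -
  define G where "G = \<xi> - th - (\<Sum>k<K. (\<omega> k * exp (\<alpha> k \<bullet> th)) *\<^sub>R \<alpha> k)"
  define F where "F t = fobj K \<alpha> \<omega> \<xi> (th + t *\<^sub>R G)" for t
  have Feq: "F = (\<lambda>t. - (\<Sum>k<K. \<omega> k * exp (\<alpha> k \<bullet> th + t * (\<alpha> k \<bullet> G))) + (\<xi> \<bullet> th + t * (\<xi> \<bullet> G))
              - (th \<bullet> th + 2 * t * (th \<bullet> G) + t^2 * (G \<bullet> G)) / 2)"
    by (rule ext) (simp add: F_def fobj_def inner_add_right inner_add_left algebra_simps power2_eq_square inner_commute)
  have D: "DERIV F 0 :> (- (\<Sum>k<K. \<omega> k * (exp (\<alpha> k \<bullet> th) * (\<alpha> k \<bullet> G))) + \<xi> \<bullet> G - th \<bullet> G)"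
    unfolding Feq by (rule derivative_eq_intros refl | simp add: mult_ac)+
  have val: "- (\<Sum>k<K. \<omega> k * (exp (\<alpha> k \<bullet> th) * (\<alpha> k \<bullet> G))) + \<xi> \<bullet> G - th \<bullet> G = G \<bullet> G"
    by (simp add: G_def inner_diff_left inner_sum_left mult_ac)
  have "G \<bullet> G = 0"
    using DERIV_local_max[OF D[unfolded val], of 1] max by (simp add: F_def)
  then have "G = 0" by simp
  then show ?thesis by (simp add: G_def algebra_simps)
qed

lemma fobj_decomp:
  fixes \<alpha> :: "nat \<Rightarrow> real^'d"
  assumes xi: "\<xi> = th + (\<Sum>k<K. (\<omega> k * exp (\<alpha> k \<bullet> th)) *\<^sub>R \<alpha> k)"
  shows "fobj K \<alpha> \<omega> \<xi> (th + u) = fobj K \<alpha> \<omega> \<xi> th - gf K \<alpha> (\<lambda>k. \<omega> k * exp (\<alpha> k \<bullet> th)) u"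
proof -
  have e: "exp (\<alpha> k \<bullet> (th + u)) = exp (\<alpha> k \<bullet> th) * exp (\<alpha> k \<bullet> u)" for k
    by (simp add: inner_add_right exp_add)
  have xu: "\<xi> \<bullet> u = th \<bullet> u + (\<Sum>k<K. \<omega> k * exp (\<alpha> k \<bullet> th) * (\<alpha> k \<bullet> u))"
    by (simp add: xi inner_add_left inner_sum_left)
  have "fobj K \<alpha> \<omega> \<xi> (th + u) = - (\<Sum>k<K. \<omega> k * (exp (\<alpha> k \<bullet> th) * exp (\<alpha> k \<bullet> u))) + \<xi> \<bullet> th + \<xi> \<bullet> u
        - (th \<bullet> th + 2 * (th \<bullet> u) + u \<bullet> u) / 2"
  proof -
    have sq: "(th + u) \<bullet> (th + u) = th \<bullet> th + 2 * (th \<bullet> u) + u \<bullet> u"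
      by (simp add: inner_add_left inner_add_right inner_commute)
    show ?thesis unfolding fobj_def e sq by (simp add: inner_add_right)
  qed
  also have "\<dots> = fobj K \<alpha> \<omega> \<xi> th - gf K \<alpha> (\<lambda>k. \<omega> k * exp (\<alpha> k \<bullet> th)) u"
    unfolding xu fobj_def gf_def phi_def
    by (simp add: algebra_simps sum_subtractf sum.distrib sum_distrib_left)
  finally show ?thesis .
qed




lemma sum_mv: "(\<Sum>k<n. M k) *v u = (\<Sum>k<n. M k *v u)"
  for M :: "nat \<Rightarrow> real^'n::finite^'n"
  by (induction n) (simp_all add: matrix_vector_mult_add_rdistrib)

lemma qf_eq:
  fixes \<alpha> :: "nat \<Rightarrow> real^'d::finite"
  shows "qf K \<alpha> w u = u \<bullet> ((mat 1 + (\<Sum>k<K. w k *\<^sub>R outer (\<alpha> k))) *v u)"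
  by (simp add: qf_def matrix_vector_mult_add_rdistrib sum_mv scaleR_matrix_vector_assoc[symmetric]
      outer_mult inner_add_right inner_sum_right power2_eq_square inner_commute mult_ac)

lemma integrable_E:
  fixes c :: real assumes c: "c > 0"
  shows "integrable lborel (\<lambda>v::'a::euclidean_space. exp (- c * (norm v - 1)))"
    and "integrable lborel (\<lambda>v::'a::euclidean_space. norm v * exp (- c * (norm v - 1)))"
proof -
  have e: "exp (- c * (norm v - 1)) = exp c * exp (- c * norm v)" for v :: 'a
    by (simp add: exp_add[symmetric] algebra_simps)
  show "integrable lborel (\<lambda>v::'a. exp (- c * (norm v - 1)))"
    unfolding e using integrable_exp_neg_norm[OF c, where 'a='a] by simp
  have i2: "integrable lborel (\<lambda>v::'a. (2 / c * exp c) * exp (- (c/2) * norm v))"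
    using integrable_exp_neg_norm[of "c/2", where 'a='a] c by simp
  show "integrable lborel (\<lambda>v::'a. norm v * exp (- c * (norm v - 1)))"
  proof (rule Bochner_Integration.integrable_bound[OF i2])
    show "(\<lambda>v::'a. norm v * exp (- c * (norm v - 1))) \<in> borel_measurable lborel" by measurable
    show "AE v in lborel. norm (norm v * exp (- c * (norm v - 1))) \<le> norm ((2 / c * exp c) * exp (- (c/2) * norm (v::'a)))"
    proof (rule AE_I2)
      fix v :: 'a
      have "c / 2 * norm v \<le> exp (c / 2 * norm v)"
        using exp_ge_add_one_self[of "c/2 * norm v"] by linarith
      then have nv: "norm v \<le> 2 / c * exp (c / 2 * norm v)" using c by (simp add: field_simps)
      have "norm v * exp (- c * (norm v - 1)) \<le> (2 / c * exp (c / 2 * norm v)) * exp (- c * (norm v - 1))"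
        by (rule mult_right_mono[OF nv]) simp
      also have "\<dots> = (2 / c * exp c) * exp (- (c/2) * norm v)"
        by (simp add: exp_add[symmetric] mult_ac) (simp add: algebra_simps)
      finally show "norm (norm v * exp (- c * (norm v - 1))) \<le> norm ((2 / c * exp c) * exp (- (c/2) * norm v))"
        using c by simp
    qed
  qed
qed



lemma core:
  fixes K :: nat and \<alpha> :: "nat \<Rightarrow> real^'d" and \<omega> :: "nat \<Rightarrow> real"
    and \<gamma> \<xi> th :: "real^'d" and L :: real
  assumes \<omega>pos: "\<And>k. k < K \<Longrightarrow> \<omega> k > 0"
    and max: "\<And>\<theta>. fobj K \<alpha> \<omega> \<xi> \<theta> \<le> fobj K \<alpha> \<omega> \<xi> th"
    and L: "\<And>k. k < K \<Longrightarrow> norm (\<alpha> k) \<le> L" and L0: "L \<ge> 0"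
    and g0: "\<gamma> \<bullet> th \<ge> 0"
  shows "\<exists>D>0. sqrt (det (Imat K \<alpha> \<omega> th)) = 1 / D \<and>
     (2 * pi) powr (- real CARD('d) / 2) * exp (fobj K \<alpha> \<omega> \<xi> th) * D *
        ((\<gamma> \<bullet> th) * exp (- (exp L / 2)) * measure lborel (cball (0::real^'d) 1)
         - norm \<gamma> * integral\<^sup>L lborel (\<lambda>v::real^'d. norm v * exp (- (exp (- L) / 2) * (norm v - 1))))
     \<le> integral\<^sup>L lborel (\<lambda>\<theta>. (2 * pi) powr (- real CARD('d) / 2) * (\<gamma> \<bullet> \<theta>) * exp (fobj K \<alpha> \<omega> \<xi> \<theta>))
   \<and> integral\<^sup>L lborel (\<lambda>\<theta>. (2 * pi) powr (- real CARD('d) / 2) * (\<gamma> \<bullet> \<theta>) * exp (fobj K \<alpha> \<omega> \<xi> \<theta>))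
     \<le> (2 * pi) powr (- real CARD('d) / 2) * exp (fobj K \<alpha> \<omega> \<xi> th) * D *
        ((\<gamma> \<bullet> th) * integral\<^sup>L lborel (\<lambda>v::real^'d. exp (- (exp (- L) / 2) * (norm v - 1)))
         + norm \<gamma> * integral\<^sup>L lborel (\<lambda>v::real^'d. norm v * exp (- (exp (- L) / 2) * (norm v - 1))))"
proof -
  define c0 where "c0 = exp (- L) / 2"
  define C1 where "C1 = exp L / 2"
  define cd where "cd = (2 * pi) powr (- real CARD('d) / 2)"
  define E where "E v = exp (- c0 * (norm v - 1))" for v :: "real^'d"
  have c0: "c0 > 0" by (simp add: c0_def)
  have C1: "C1 > 0" by (simp add: C1_def)
  have cd: "cd > 0" by (simp add: cd_def)
  define w where "w k = \<omega> k * exp (\<alpha> k \<bullet> th)" for k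
  have w0: "\<And>k. k < K \<Longrightarrow> w k \<ge> 0" using \<omega>pos by (simp add: w_def less_imp_le)
  define A where "A = mat 1 + (\<Sum>k<K. w k *\<^sub>R outer (\<alpha> k))"
  have Aeq: "Imat K \<alpha> \<omega> th = A"
    by (simp add: Imat_def A_def outer_def w_def)
  obtain P :: "real^'d^'d" where P: "\<And>x. transpose P *v (A *v (P *v x)) = x"
    using congruence_exists[of K w \<alpha>] w0 unfolding A_def by blast
  have dP: "det P ^ 2 * det A = 1" by (rule congruence_det) (rule P)
  define D where "D = \<bar>det P\<bar>"
  have D0: "D > 0" using dP by (auto simp: D_def)
  have sqA: "sqrt (det A) = 1 / D"
  proof -
    have "det A = 1 / D^2" using dP D0 by (simp add: D_def field_simps power2_abs)
    then show ?thesis using D0 by (simp add: real_sqrt_divide)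
  qed
  have qP: "qf K \<alpha> w (P *v v) = norm v ^ 2" for v
  proof -
    have "qf K \<alpha> w (P *v v) = (P *v v) \<bullet> (A *v (P *v v))" by (simp add: qf_eq A_def)
    also have "\<dots> = (transpose P *v (A *v (P *v v))) \<bullet> v"
      by (subst inner_transpose_mv) (rule inner_commute)
    also have "\<dots> = norm v ^ 2" by (simp only: P power2_norm_eq_inner)
    finally show ?thesis .
  qed
  have nP: "norm (P *v v) \<le> norm v" for v
  proof -
    have "norm (P *v v) ^ 2 \<le> qf K \<alpha> w (P *v v)"
      unfolding qf_def power2_norm_eq_inner using w0 by (auto intro!: sum_nonneg)
    then show ?thesis unfolding qP by (rule power2_le_imp_le) simp
  qed
  have gl: "c0 * (norm v - 1) \<le> gf K \<alpha> w (P *v v)" for v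
    unfolding c0_def by (rule gf_lower[OF w0 L L0 qP nP])
  have gu: "gf K \<alpha> w (P *v v) \<le> C1" if "norm v \<le> 1" for v
  proof -
    have "gf K \<alpha> w (P *v v) \<le> exp L / 2 * qf K \<alpha> w (P *v v)"
      by (rule gf_bounds(2)[OF w0 L L0]) (use nP[of v] that in auto)
    also have "\<dots> \<le> exp L / 2 * 1" unfolding qP using that
      by (intro mult_left_mono) (auto simp: power_le_one)
    finally show ?thesis by (simp add: C1_def)
  qed
  have xi: "\<xi> = th + (\<Sum>k<K. w k *\<^sub>R \<alpha> k)"
    unfolding w_def by (rule grad_zero[OF max])
  have dec: "fobj K \<alpha> \<omega> \<xi> (th + u) = fobj K \<alpha> \<omega> \<xi> th - gf K \<alpha> w u" for u
    unfolding w_def by (rule fobj_decomp) (use xi in \<open>simp add: w_def\<close>)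
  define h where "h \<theta> = cd * (\<gamma> \<bullet> \<theta>) * exp (fobj K \<alpha> \<omega> \<xi> \<theta>)" for \<theta>
  define H where "H v = ((\<gamma> \<bullet> th) + \<gamma> \<bullet> (P *v v)) * exp (- gf K \<alpha> w (P *v v))" for v
  have linP: "linear ((*v) P)" by simp
  have mP: "matrix ((*v) P) = P" by simp
  have detP0: "det P \<noteq> 0" using D0 by (simp add: D_def)
  have hm: "h \<in> borel_measurable borel"
    unfolding h_def fobj_def by (intro borel_measurable_continuous_onI continuous_intros) auto
  have hH: "h (th + P *v v) = (cd * exp (fobj K \<alpha> \<omega> \<xi> th)) * H v" for v
    by (simp add: h_def H_def dec inner_add_right exp_diff exp_minus field_simps)
  have J: "integral\<^sup>L lborel h = D * (cd * exp (fobj K \<alpha> \<omega> \<xi> th) * integral\<^sup>L lborel H)"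
    using integral_affine_linear(1)[OF linP, unfolded mP, OF detP0 hm, of th]
    by (simp add: hH D_def)
  have Hm0: "H \<in> borel_measurable borel"
    unfolding H_def gf_def phi_def by (intro borel_measurable_continuous_onI continuous_intros) auto
  then have Hm: "H \<in> borel_measurable lborel" by simp
  have Ei: "integrable lborel E" unfolding E_def by (rule integrable_E(1)[OF c0])
  have NEi: "integrable lborel (\<lambda>v. norm v * E v)" unfolding E_def by (rule integrable_E(2)[OF c0])
  have eg: "exp (- gf K \<alpha> w (P *v v)) \<le> E v" for v
    using gl[of v] by (simp add: E_def)
  have gP: "\<bar>\<gamma> \<bullet> (P *v v)\<bar> \<le> norm \<gamma> * norm v" for v
    using Cauchy_Schwarz_ineq2[of \<gamma> "P *v v"] nP[of v] by (meson mult_left_mono norm_ge_zero order_trans)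
  have Hup: "H v \<le> (\<gamma> \<bullet> th) * E v + norm \<gamma> * (norm v * E v)" for v
  proof -
    have "H v = (\<gamma> \<bullet> th) * exp (- gf K \<alpha> w (P *v v)) + (\<gamma> \<bullet> (P *v v)) * exp (- gf K \<alpha> w (P *v v))"
      by (simp add: H_def distrib_right)
    also have "(\<gamma> \<bullet> th) * exp (- gf K \<alpha> w (P *v v)) \<le> (\<gamma> \<bullet> th) * E v"
      by (rule mult_left_mono[OF eg g0])
    also have "(\<gamma> \<bullet> (P *v v)) * exp (- gf K \<alpha> w (P *v v)) \<le> norm \<gamma> * norm v * E v"
      using gP[of v] eg[of v] by (smt (verit) abs_le_D1 exp_gt_zero mult_mono mult_nonneg_nonneg norm_ge_zero)
    finally show ?thesis by (simp add: mult_ac)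
  qed
  have Hlo: "(\<gamma> \<bullet> th) * exp (- C1) * indicator (cball 0 1) v - norm \<gamma> * (norm v * E v) \<le> H v" for v
  proof -
    have a: "(\<gamma> \<bullet> th) * exp (- C1) * indicator (cball 0 1) v \<le> (\<gamma> \<bullet> th) * exp (- gf K \<alpha> w (P *v v))"
    proof (cases "norm v \<le> 1")
      case True
      then have "exp (- C1) \<le> exp (- gf K \<alpha> w (P *v v))" using gu[of v] by simp
      then show ?thesis using True g0 by (simp add: mult_left_mono)
    next
      case False
      then show ?thesis using g0 by (simp add: indicator_def)
    qed
    have b: "- (norm \<gamma> * (norm v * E v)) \<le> (\<gamma> \<bullet> (P *v v)) * exp (- gf K \<alpha> w (P *v v))"
    proof -
      have "\<bar>(\<gamma> \<bullet> (P *v v)) * exp (- gf K \<alpha> w (P *v v))\<bar> \<le> norm \<gamma> * norm v * E v"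
        using gP[of v] eg[of v] by (simp add: abs_mult mult_mono)
      then show ?thesis by (simp add: mult_ac)
    qed
    show ?thesis using a b by (simp add: H_def distrib_right)
  qed
  have Bi: "integrable lborel (\<lambda>v. (\<gamma> \<bullet> th) * E v + norm \<gamma> * (norm v * E v))"
    using Ei NEi by simp
  have Hi: "integrable lborel H"
  proof (rule Bochner_Integration.integrable_bound[OF Bi Hm])
    show "AE v in lborel. norm (H v) \<le> norm ((\<gamma> \<bullet> th) * E v + norm \<gamma> * (norm v * E v))"
    proof (rule AE_I2)
      fix v
      have "- ((\<gamma> \<bullet> th) * E v + norm \<gamma> * (norm v * E v)) \<le> H v"
      proof -
        have "- ((\<gamma> \<bullet> th) * E v + norm \<gamma> * (norm v * E v)) \<le> (\<gamma> \<bullet> th) * exp (- C1) * indicator (cball 0 1) v - norm \<gamma> * (norm v * E v)"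
        proof -
          have "0 \<le> (\<gamma> \<bullet> th) * E v" using g0 by (simp add: E_def)
          moreover have "0 \<le> (\<gamma> \<bullet> th) * exp (- C1) * indicator (cball 0 1) v" using g0 by simp
          ultimately show ?thesis by linarith
        qed
        then show ?thesis using Hlo[of v] by linarith
      qed
      moreover have "0 \<le> (\<gamma> \<bullet> th) * E v + norm \<gamma> * (norm v * E v)" using g0 by (simp add: E_def)
      ultimately show "norm (H v) \<le> norm ((\<gamma> \<bullet> th) * E v + norm \<gamma> * (norm v * E v))"
        using Hup[of v] by simp
    qed
  qed
  have Ii: "integrable lborel (indicator (cball (0::real^'d) 1) :: real^'d \<Rightarrow> real)"
    by (rule integrable_real_indicator) (auto intro: emeasure_lborel_cball_finite[unfolded infinity_ennreal_def])
  have up: "integral\<^sup>L lborel H \<le> (\<gamma> \<bullet> th) * integral\<^sup>L lborel E + norm \<gamma> * integral\<^sup>L lborel (\<lambda>v. norm v * E v)"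
  proof -
    have "integral\<^sup>L lborel H \<le> integral\<^sup>L lborel (\<lambda>v. (\<gamma> \<bullet> th) * E v + norm \<gamma> * (norm v * E v))"
      by (rule integral_mono[OF Hi Bi Hup])
    also have "\<dots> = (\<gamma> \<bullet> th) * integral\<^sup>L lborel E + norm \<gamma> * integral\<^sup>L lborel (\<lambda>v. norm v * E v)"
      using Ei NEi by simp
    finally show ?thesis .
  qed
  have lo: "(\<gamma> \<bullet> th) * exp (- C1) * measure lborel (cball (0::real^'d) 1) - norm \<gamma> * integral\<^sup>L lborel (\<lambda>v. norm v * E v) \<le> integral\<^sup>L lborel H"
  proof -
    have li: "integrable lborel (\<lambda>v. (\<gamma> \<bullet> th) * exp (- C1) * indicator (cball (0::real^'d) 1) v - norm \<gamma> * (norm v * E v))"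
      using Ii NEi by simp
    have "(\<gamma> \<bullet> th) * exp (- C1) * measure lborel (cball (0::real^'d) 1) - norm \<gamma> * integral\<^sup>L lborel (\<lambda>v. norm v * E v)
        = integral\<^sup>L lborel (\<lambda>v. (\<gamma> \<bullet> th) * exp (- C1) * indicator (cball (0::real^'d) 1) v - norm \<gamma> * (norm v * E v))"
      using Ii NEi by simp
    also have "\<dots> \<le> integral\<^sup>L lborel H"
      by (rule integral_mono[OF li Hi Hlo])
    finally show ?thesis .
  qed
  have pos: "0 \<le> D * (cd * exp (fobj K \<alpha> \<omega> \<xi> th))" using D0 cd by simp
  have r1: "cd * exp (fobj K \<alpha> \<omega> \<xi> th) * D *
        ((\<gamma> \<bullet> th) * exp (- (exp L / 2)) * measure lborel (cball (0::real^'d) 1)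
         - norm \<gamma> * integral\<^sup>L lborel (\<lambda>v::real^'d. norm v * exp (- (exp (- L) / 2) * (norm v - 1))))
     \<le> integral\<^sup>L lborel (\<lambda>\<theta>. cd * (\<gamma> \<bullet> \<theta>) * exp (fobj K \<alpha> \<omega> \<xi> \<theta>))"
      using mult_left_mono[OF lo pos] unfolding J[unfolded h_def] E_def c0_def C1_def
      by (simp add: mult_ac)
  have r2: "integral\<^sup>L lborel (\<lambda>\<theta>. cd * (\<gamma> \<bullet> \<theta>) * exp (fobj K \<alpha> \<omega> \<xi> \<theta>))
     \<le> cd * exp (fobj K \<alpha> \<omega> \<xi> th) * D *
        ((\<gamma> \<bullet> th) * integral\<^sup>L lborel (\<lambda>v::real^'d. exp (- (exp (- L) / 2) * (norm v - 1)))
         + norm \<gamma> * integral\<^sup>L lborel (\<lambda>v::real^'d. norm v * exp (- (exp (- L) / 2) * (norm v - 1))))"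
      using mult_left_mono[OF up pos] unfolding J[unfolded h_def] E_def c0_def C1_def
      by (simp add: mult_ac)
  have r0: "sqrt (det (Imat K \<alpha> \<omega> th)) = 1 / D" using sqA Aeq by simp
  show ?thesis using D0 r0 r1 r2 unfolding cd_def by blast
qed



lemma main_top:
  fixes K :: nat and \<alpha> :: "nat \<Rightarrow> real^'d" and \<omega> :: "nat \<Rightarrow> real"
    and \<gamma> :: "real^'d" and \<xi> :: "nat \<Rightarrow> real^'d" and \<theta>hat :: "nat \<Rightarrow> real^'d"
  assumes \<omega>pos: "\<And>k. k < K \<Longrightarrow> \<omega> k > 0"
    and max: "\<And>n \<theta>. fobj K \<alpha> \<omega> (\<xi> n) \<theta> \<le> fobj K \<alpha> \<omega> (\<xi> n) (\<theta>hat n)"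
    and lim: "filterlim (\<lambda>n. \<gamma> \<bullet> \<theta>hat n) at_top sequentially"
  shows "\<exists>M>0. \<forall>\<^sub>F n in sequentially.
         let R = (\<gamma> \<bullet> \<theta>hat n) * exp (fobj K \<alpha> \<omega> (\<xi> n) (\<theta>hat n))
                   / sqrt (det (Imat K \<alpha> \<omega> (\<theta>hat n)));
             J = integral\<^sup>L lborel (\<lambda>\<theta>. (2 * pi) powr (- real CARD('d) / 2)
                   * (\<gamma> \<bullet> \<theta>) * exp (fobj K \<alpha> \<omega> (\<xi> n) \<theta>))
         in inverse M * R \<le> J \<and> J \<le> M * R"
proof -
  define L where "L = (\<Sum>k<K. norm (\<alpha> k))"
  have L: "\<And>k. k < K \<Longrightarrow> norm (\<alpha> k) \<le> L"
    unfolding L_def by (rule member_le_sum) auto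
  have L0: "L \<ge> 0" unfolding L_def by (simp add: sum_nonneg)
  define C1 where "C1 = exp L / 2"
  define c0 where "c0 = exp (- L) / 2"
  define cd where "cd = (2 * pi) powr (- real CARD('d) / 2)"
  define V1 where "V1 = measure lborel (cball (0::real^'d) 1)"
  define B0 where "B0 = integral\<^sup>L lborel (\<lambda>v::real^'d. exp (- c0 * (norm v - 1)))"
  define B1 where "B1 = integral\<^sup>L lborel (\<lambda>v::real^'d. norm v * exp (- c0 * (norm v - 1)))"
  have cd: "cd > 0" by (simp add: cd_def)
  have V1: "V1 > 0" unfolding V1_def using content_cball_gt_0_iff[of "0::real^'d" 1] by simp
  have B0: "B0 \<ge> 0" unfolding B0_def by (rule integral_nonneg_AE) simp
  have B1: "B1 \<ge> 0" unfolding B1_def by (rule integral_nonneg_AE) simp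
  define e where "e = exp (- C1) * V1"
  have e: "e > 0" using V1 by (simp add: e_def)
  define a where "a = cd * e / 2"
  have a: "a > 0" using cd e by (simp add: a_def)
  define M where "M = max (1 / a) (max (cd * (B0 + norm \<gamma> * B1)) 1)"
  have M: "M > 0" by (simp add: M_def)
  define X0 where "X0 = max 1 (2 * norm \<gamma> * B1 / e)"
  have ev: "\<forall>\<^sub>F n in sequentially. X0 \<le> \<gamma> \<bullet> \<theta>hat n"
    using lim unfolding filterlim_at_top by blast
  show ?thesis
  proof (intro exI[of _ M] conjI M)
    show "\<forall>\<^sub>F n in sequentially.
         let R = (\<gamma> \<bullet> \<theta>hat n) * exp (fobj K \<alpha> \<omega> (\<xi> n) (\<theta>hat n))
                   / sqrt (det (Imat K \<alpha> \<omega> (\<theta>hat n)));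
             J = integral\<^sup>L lborel (\<lambda>\<theta>. (2 * pi) powr (- real CARD('d) / 2)
                   * (\<gamma> \<bullet> \<theta>) * exp (fobj K \<alpha> \<omega> (\<xi> n) \<theta>))
         in inverse M * R \<le> J \<and> J \<le> M * R"
      using ev
    proof (rule eventually_mono)
      fix n assume xn: "X0 \<le> \<gamma> \<bullet> \<theta>hat n"
      define x where "x = \<gamma> \<bullet> \<theta>hat n"
      define F where "F = exp (fobj K \<alpha> \<omega> (\<xi> n) (\<theta>hat n))"
      define J where "J = integral\<^sup>L lborel (\<lambda>\<theta>. (2 * pi) powr (- real CARD('d) / 2)
                   * (\<gamma> \<bullet> \<theta>) * exp (fobj K \<alpha> \<omega> (\<xi> n) \<theta>))"
      have x1: "x \<ge> 1" using xn by (simp add: x_def X0_def)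
      have x2: "2 * norm \<gamma> * B1 / e \<le> x" using xn by (simp add: x_def X0_def)
      have F: "F > 0" by (simp add: F_def)
      obtain D where D: "D > 0" "sqrt (det (Imat K \<alpha> \<omega> (\<theta>hat n))) = 1 / D"
        and lo: "cd * F * D * (x * exp (- C1) * V1 - norm \<gamma> * B1) \<le> J"
        and up: "J \<le> cd * F * D * (x * B0 + norm \<gamma> * B1)"
        using core[where \<gamma>=\<gamma>, OF \<omega>pos max[of n] L L0] x1
        unfolding x_def F_def J_def cd_def C1_def V1_def B0_def B1_def c0_def by auto
      define R where "R = x * F * D"
      have Req: "(\<gamma> \<bullet> \<theta>hat n) * exp (fobj K \<alpha> \<omega> (\<xi> n) (\<theta>hat n)) / sqrt (det (Imat K \<alpha> \<omega> (\<theta>hat n))) = R"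
        unfolding D(2) by (simp add: R_def x_def F_def)
      have R0: "R \<ge> 0" using x1 F D by (simp add: R_def)
      have "norm \<gamma> * B1 \<le> x * e / 2" using x2 e by (simp add: field_simps)
      then have "x * e / 2 \<le> x * exp (- C1) * V1 - norm \<gamma> * B1" by (simp add: e_def mult_ac)
      then have "cd * F * D * (x * e / 2) \<le> cd * F * D * (x * exp (- C1) * V1 - norm \<gamma> * B1)"
        using cd F D by (intro mult_left_mono) auto
      then have aJ: "cd * F * D * (x * e / 2) \<le> J" using lo by linarith
      have "a * R = cd * F * D * (x * e / 2)" by (simp add: a_def R_def algebra_simps)
      then have "a * R \<le> J" using aJ by simp
      moreover have "inverse M * R \<le> a * R"
      proof (rule mult_right_mono[OF _ R0])
        have "1 / a \<le> M" by (simp add: M_def)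
        then show "inverse M \<le> a" using a M by (simp add: field_simps)
      qed
      ultimately have low: "inverse M * R \<le> J" by linarith
      have nb: "0 \<le> norm \<gamma> * B1" using B1 by simp
      have "1 * (norm \<gamma> * B1) \<le> x * (norm \<gamma> * B1)" by (rule mult_right_mono[OF x1 nb])
      then have "x * B0 + norm \<gamma> * B1 \<le> x * (B0 + norm \<gamma> * B1)" by (simp add: distrib_left)
      moreover have "0 \<le> cd * F * D" using cd F D by simp
      ultimately have "cd * F * D * (x * B0 + norm \<gamma> * B1) \<le> cd * F * D * (x * (B0 + norm \<gamma> * B1))"
        by (rule mult_left_mono)
      then have "J \<le> cd * F * D * (x * (B0 + norm \<gamma> * B1))" using up by linarith
      also have "\<dots> = (cd * (B0 + norm \<gamma> * B1)) * R" by (simp add: R_def mult_ac)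
      also have "\<dots> \<le> M * R" by (rule mult_right_mono[OF _ R0]) (simp add: M_def)
      finally have upp: "J \<le> M * R" .
      show "let R = (\<gamma> \<bullet> \<theta>hat n) * exp (fobj K \<alpha> \<omega> (\<xi> n) (\<theta>hat n))
                   / sqrt (det (Imat K \<alpha> \<omega> (\<theta>hat n)));
             J = integral\<^sup>L lborel (\<lambda>\<theta>. (2 * pi) powr (- real CARD('d) / 2)
                   * (\<gamma> \<bullet> \<theta>) * exp (fobj K \<alpha> \<omega> (\<xi> n) \<theta>))
         in inverse M * R \<le> J \<and> J \<le> M * R"
        unfolding Let_def Req J_def[symmetric] using low upp by simp
    qed
  qed
qed


theorem proposition10:
  fixes K :: nat and \<alpha> :: "nat \<Rightarrow> real^'d" and \<omega> :: "nat \<Rightarrow> real"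
    and \<gamma> :: "real^'d" and \<xi> :: "nat \<Rightarrow> real^'d" and \<theta>hat :: "nat \<Rightarrow> real^'d"
  assumes K: "K \<ge> 1"
    and \<omega>pos: "\<And>k. k < K \<Longrightarrow> \<omega> k > 0"
    and max: "\<And>n \<theta>. fobj K \<alpha> \<omega> (\<xi> n) \<theta> \<le> fobj K \<alpha> \<omega> (\<xi> n) (\<theta>hat n)"
  shows
   "(filterlim (\<lambda>n. \<gamma> \<bullet> \<theta>hat n) at_top sequentially \<longrightarrow>
      (\<exists>M>0. \<forall>\<^sub>F n in sequentially.
         let R = (\<gamma> \<bullet> \<theta>hat n) * exp (fobj K \<alpha> \<omega> (\<xi> n) (\<theta>hat n))
                   / sqrt (det (Imat K \<alpha> \<omega> (\<theta>hat n)));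
             J = integral\<^sup>L lborel (\<lambda>\<theta>. (2 * pi) powr (- real CARD('d) / 2)
                   * (\<gamma> \<bullet> \<theta>) * exp (fobj K \<alpha> \<omega> (\<xi> n) \<theta>))
         in inverse M * R \<le> J \<and> J \<le> M * R))
  \<and> (filterlim (\<lambda>n. \<gamma> \<bullet> \<theta>hat n) at_bot sequentially \<longrightarrow>
      (\<exists>M>0. \<forall>\<^sub>F n in sequentially.
         let R = ((- \<gamma>) \<bullet> \<theta>hat n) * exp (fobj K \<alpha> \<omega> (\<xi> n) (\<theta>hat n))
                   / sqrt (det (Imat K \<alpha> \<omega> (\<theta>hat n)));
             J = integral\<^sup>L lborel (\<lambda>\<theta>. (2 * pi) powr (- real CARD('d) / 2)
                   * ((- \<gamma>) \<bullet> \<theta>) * exp (fobj K \<alpha> \<omega> (\<xi> n) \<theta>))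
         in inverse M * R \<le> J \<and> J \<le> M * R))"
proof -
  have A: "filterlim (\<lambda>n. \<gamma> \<bullet> \<theta>hat n) at_top sequentially \<longrightarrow>
      (\<exists>M>0. \<forall>\<^sub>F n in sequentially.
         let R = (\<gamma> \<bullet> \<theta>hat n) * exp (fobj K \<alpha> \<omega> (\<xi> n) (\<theta>hat n))
                   / sqrt (det (Imat K \<alpha> \<omega> (\<theta>hat n)));
             J = integral\<^sup>L lborel (\<lambda>\<theta>. (2 * pi) powr (- real CARD('d) / 2)
                   * (\<gamma> \<bullet> \<theta>) * exp (fobj K \<alpha> \<omega> (\<xi> n) \<theta>))
         in inverse M * R \<le> J \<and> J \<le> M * R)"
    using main_top[where \<xi>=\<xi> and \<theta>hat=\<theta>hat and \<gamma>=\<gamma>, OF \<omega>pos max] by blast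
  have B: "filterlim (\<lambda>n. \<gamma> \<bullet> \<theta>hat n) at_bot sequentially \<longrightarrow>
      (\<exists>M>0. \<forall>\<^sub>F n in sequentially.
         let R = ((- \<gamma>) \<bullet> \<theta>hat n) * exp (fobj K \<alpha> \<omega> (\<xi> n) (\<theta>hat n))
                   / sqrt (det (Imat K \<alpha> \<omega> (\<theta>hat n)));
             J = integral\<^sup>L lborel (\<lambda>\<theta>. (2 * pi) powr (- real CARD('d) / 2)
                   * ((- \<gamma>) \<bullet> \<theta>) * exp (fobj K \<alpha> \<omega> (\<xi> n) \<theta>))
         in inverse M * R \<le> J \<and> J \<le> M * R)"
  proof
    assume bot: "filterlim (\<lambda>n. \<gamma> \<bullet> \<theta>hat n) at_bot sequentially"
    have "filterlim (\<lambda>n. - (\<gamma> \<bullet> \<theta>hat n)) at_top sequentially"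
      using filterlim_uminus_at_top[of "\<lambda>n. - (\<gamma> \<bullet> \<theta>hat n)" sequentially] bot by simp
    then have "filterlim (\<lambda>n. (- \<gamma>) \<bullet> \<theta>hat n) at_top sequentially" by simp
    from main_top[where \<xi>=\<xi> and \<theta>hat=\<theta>hat and \<gamma>="- \<gamma>", OF \<omega>pos max this] show "\<exists>M>0. \<forall>\<^sub>F n in sequentially.
         let R = ((- \<gamma>) \<bullet> \<theta>hat n) * exp (fobj K \<alpha> \<omega> (\<xi> n) (\<theta>hat n))
                   / sqrt (det (Imat K \<alpha> \<omega> (\<theta>hat n)));
             J = integral\<^sup>L lborel (\<lambda>\<theta>. (2 * pi) powr (- real CARD('d) / 2)
                   * ((- \<gamma>) \<bullet> \<theta>) * exp (fobj K \<alpha> \<omega> (\<xi> n) \<theta>))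
         in inverse M * R \<le> J \<and> J \<le> M * R" .
  qed
  show ?thesis using A B by blast
qed

end
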